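(* Let $1/n\ll\gamma\ll\tau\ll\varepsilon\ll\alpha\ll 1$, let $k\in\mathbb{N}$, and let $G$ be a $d$-regular digraph on $n$ vertices with $d\geq(\alpha+\varepsilon)n$. If $\mathcal{P}_k=\{V_{ij}:i,j\in[k]\}$ is a $(k^2,\tau,\gamma)$-partition of $G$, then $|V_{i*}|,|V_{*i}|\geq d-\varepsilon n/2$ for all $i\in[k]$. In particular, $\mathcal{P}_k$ is a $(k^2,\alpha+\varepsilon/2,\gamma)$-partition of $G$.
   Context: Hierarchy convention: $x\ll y$ means $x\leq f(y)$ for some implicitly given non-decreasing function $f:(0,1]\to(0,1]$; the statement asserts that such functions exist, the constants being chosen from right to left. A digraph is $d$-regular if every vertex has in- and outdegree $d$. A $k^2$-partition of $V(G)$ is a family $\{V_{ij}:i,j\in[k]\}$ of pairwise disjoint (possibly empty) sets with union $V(G)$; $V_{i*}=\bigcup_j V_{ij}$, $V_{*j}=\bigcup_i V_{ij}$. $E(A,B)$ is the set of edges $ab$ with $a\in A$, $b\in B$. Bad edges: $\mathcal{B}_k(\mathcal{P}_k,G)=\bigcup_{i\neq j}E(V_{i*},V_{*j})$. A $(k^2,\tau,\gamma)$-partition of an $n$-vertex digraph is a $k^2$-partition with $|\mathcal{B}_k(\mathcal{P}_k,G)|\leq\gamma n^2$ and $|V_{i*}|,|V_{*j}|\geq\tau n$ for all $i,j\in[k]$. *)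

theory Defs
  imports Complex_Main
begin

definition digraph :: "nat set \<Rightarrow> (nat \<times> nat) set \<Rightarrow> bool" where
  "digraph V E \<longleftrightarrow> finite V \<and> E \<subseteq> V \<times> V \<and> (\<forall>v. (v, v) \<notin> E)"

definition outnbrs :: "(nat \<times> nat) set \<Rightarrow> nat \<Rightarrow> nat set" where
  "outnbrs E v = {u. (v, u) \<in> E}"

definition innbrs :: "(nat \<times> nat) set \<Rightarrow> nat \<Rightarrow> nat set" where
  "innbrs E v = {u. (u, v) \<in> E}"

definition regular_digraph :: "nat set \<Rightarrow> (nat \<times> nat) set \<Rightarrow> nat \<Rightarrow> bool" where
  "regular_digraph V E d \<longleftrightarrow> digraph V E \<and>
     (\<forall>v\<in>V. card (outnbrs E v) = d \<and> card (innbrs E v) = d)"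

definition edges_between :: "(nat \<times> nat) set \<Rightarrow> nat set \<Rightarrow> nat set \<Rightarrow> (nat \<times> nat) set" where
  "edges_between E A B = {(a, b) \<in> E. a \<in> A \<and> b \<in> B}"

definition row_part :: "nat \<Rightarrow> (nat \<Rightarrow> nat \<Rightarrow> nat set) \<Rightarrow> nat \<Rightarrow> nat set" where
  "row_part k P i = (\<Union>j\<in>{1..k}. P i j)"

definition col_part :: "nat \<Rightarrow> (nat \<Rightarrow> nat \<Rightarrow> nat set) \<Rightarrow> nat \<Rightarrow> nat set" where
  "col_part k P j = (\<Union>i\<in>{1..k}. P i j)"

definition ksq_partition :: "nat \<Rightarrow> (nat \<Rightarrow> nat \<Rightarrow> nat set) \<Rightarrow> nat set \<Rightarrow> bool" where
  "ksq_partition k P V \<longleftrightarrow>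
     (\<forall>i\<in>{1..k}. \<forall>j\<in>{1..k}. \<forall>i'\<in>{1..k}. \<forall>j'\<in>{1..k}.
        (i, j) \<noteq> (i', j') \<longrightarrow> P i j \<inter> P i' j' = {}) \<and>
     (\<Union>i\<in>{1..k}. \<Union>j\<in>{1..k}. P i j) = V"

definition bad_edges :: "nat \<Rightarrow> (nat \<Rightarrow> nat \<Rightarrow> nat set) \<Rightarrow> (nat \<times> nat) set \<Rightarrow> (nat \<times> nat) set" where
  "bad_edges k P E = (\<Union>i\<in>{1..k}. \<Union>j\<in>{1..k}.
      if i \<noteq> j then edges_between E (row_part k P i) (col_part k P j) else {})"

definition ksq_tau_gamma_partition ::
  "nat \<Rightarrow> real \<Rightarrow> real \<Rightarrow> (nat \<Rightarrow> nat \<Rightarrow> nat set) \<Rightarrow> nat set \<Rightarrow> (nat \<times> nat) set \<Rightarrow> bool" where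
  "ksq_tau_gamma_partition k \<tau> \<gamma> P V E \<longleftrightarrow>
     ksq_partition k P V \<and>
     real (card (bad_edges k P E)) \<le> \<gamma> * real (card V) ^ 2 \<and>
     (\<forall>i\<in>{1..k}. real (card (row_part k P i)) \<ge> \<tau> * real (card V) \<and>
                 real (card (col_part k P i)) \<ge> \<tau> * real (card V))"

end

theory Submission
  imports Defs
begin

lemma card_out_edges:
  assumes "regular_digraph V E d" "A \<subseteq> V"
  shows "card {(a, b) \<in> E. a \<in> A} = d * card A"
proof -
  have fin: "finite V" "E \<subseteq> V \<times> V" using assms(1) unfolding regular_digraph_def digraph_def by auto
  have eq: "{(a, b) \<in> E. a \<in> A} = Sigma A (outnbrs E)" unfolding outnbrs_def by auto
  have "finite A" using fin assms(2) finite_subset by blast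
  moreover have "\<And>a. finite (outnbrs E a)"
    proof -
    fix a have "outnbrs E a \<subseteq> V" using fin unfolding outnbrs_def by auto
    then show "finite (outnbrs E a)" using fin finite_subset by blast
  qed
  ultimately have "card (Sigma A (outnbrs E)) = (\<Sum>a\<in>A. card (outnbrs E a))"
    by (simp add: card_SigmaI)
  also have "\<dots> = (\<Sum>a\<in>A. d)" using assms unfolding regular_digraph_def by (intro sum.cong) auto
  finally show ?thesis using eq by simp
qed

lemma card_in_edges:
  assumes "regular_digraph V E d" "A \<subseteq> V"
  shows "card {(a, b) \<in> E. b \<in> A} = d * card A"
proof -
  have fin: "finite V" "E \<subseteq> V \<times> V" using assms(1) unfolding regular_digraph_def digraph_def by auto
  have eq: "{(a, b) \<in> E. b \<in> A} = (\<lambda>(x,y). (y,x)) ` Sigma A (innbrs E)" unfolding innbrs_def by auto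
  have inj: "inj_on (\<lambda>(x,y). (y,x)) (Sigma A (innbrs E))" by (auto simp: inj_on_def)
  have "finite A" using fin assms(2) finite_subset by blast
  moreover have "\<And>a. finite (innbrs E a)"
    proof -
    fix a have "innbrs E a \<subseteq> V" using fin unfolding innbrs_def by auto
    then show "finite (innbrs E a)" using fin finite_subset by blast
  qed
  ultimately have "card (Sigma A (innbrs E)) = (\<Sum>a\<in>A. card (innbrs E a))"
    by (simp add: card_SigmaI)
  also have "\<dots> = (\<Sum>a\<in>A. d)" using assms unfolding regular_digraph_def by (intro sum.cong) auto
  finally show ?thesis using eq card_image[OF inj] by simp
qed

lemma key_bounds:
  assumes reg: "regular_digraph V E d" and part: "ksq_partition k P V" and i: "i \<in> {1..k}"
  shows "real d * card (row_part k P i) \<le> real (card (row_part k P i)) * card (col_part k P i) + card (bad_edges k P E)"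
    and "real d * card (col_part k P i) \<le> real (card (row_part k P i)) * card (col_part k P i) + card (bad_edges k P E)"
proof -
  have fin: "finite V" "E \<subseteq> V \<times> V" using reg unfolding regular_digraph_def digraph_def by auto
  have U: "(\<Union>i\<in>{1..k}. \<Union>j\<in>{1..k}. P i j) = V" using part unfolding ksq_partition_def by auto
  have Rsub: "row_part k P i \<subseteq> V" using U i unfolding row_part_def by blast
  have Csub: "col_part k P i \<subseteq> V" using U i unfolding col_part_def by blast
  have row_cover: "\<exists>j\<in>{1..k}. v \<in> row_part k P j" if "v \<in> V" for v
    using U that unfolding row_part_def by blast
  have col_cover: "\<exists>j\<in>{1..k}. v \<in> col_part k P j" if "v \<in> V" for v
    using U that unfolding col_part_def by blast
  have bad: "(a,b) \<in> bad_edges k P E" if "(a,b) \<in> E" "a \<in> row_part k P i'" "b \<in> col_part k P j'"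
    "i' \<in> {1..k}" "j' \<in> {1..k}" "i' \<noteq> j'" for a b i' j'
  proof -
    have "(a,b) \<in> edges_between E (row_part k P i') (col_part k P j')"
      unfolding edges_between_def using that by simp
    then have "(a,b) \<in> (if i' \<noteq> j' then edges_between E (row_part k P i') (col_part k P j') else {})"
      using that(6) by simp
    then show ?thesis unfolding bad_edges_def using that(4,5) by (intro UN_I) auto
  qed
  have finB: "finite (bad_edges k P E)"
  proof -
    have "bad_edges k P E \<subseteq> E" unfolding bad_edges_def edges_between_def by auto
    moreover have "finite E" using fin finite_subset by blast
    ultimately show ?thesis using finite_subset by blast
  qed
  have finRC: "finite (row_part k P i \<times> col_part k P i)"
    using Rsub Csub fin by (meson finite_SigmaI finite_subset)
  have s1: "{(a, b) \<in> E. a \<in> row_part k P i} \<subseteq> (row_part k P i \<times> col_part k P i) \<union> bad_edges k P E"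
  proof
    fix x assume "x \<in> {(a, b) \<in> E. a \<in> row_part k P i}"
    then obtain a b where x: "x = (a,b)" "(a,b) \<in> E" "a \<in> row_part k P i" by auto
    then have "b \<in> V" using fin by auto
    then obtain j where "j \<in> {1..k}" "b \<in> col_part k P j" using col_cover by blast
    then show "x \<in> (row_part k P i \<times> col_part k P i) \<union> bad_edges k P E"
      using bad[of a b i j] x i by (cases "i = j") auto
  qed
  have s2: "{(a, b) \<in> E. b \<in> col_part k P i} \<subseteq> (row_part k P i \<times> col_part k P i) \<union> bad_edges k P E"
  proof
    fix x assume "x \<in> {(a, b) \<in> E. b \<in> col_part k P i}"
    then obtain a b where x: "x = (a,b)" "(a,b) \<in> E" "b \<in> col_part k P i" by auto
    then have "a \<in> V" using fin by auto
    then obtain j where "j \<in> {1..k}" "a \<in> row_part k P j" using row_cover by blast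
    then show "x \<in> (row_part k P i \<times> col_part k P i) \<union> bad_edges k P E"
      using bad[of a b j i] x i by (cases "i = j") auto
  qed
  have cu: "card ((row_part k P i \<times> col_part k P i) \<union> bad_edges k P E)
      \<le> card (row_part k P i) * card (col_part k P i) + card (bad_edges k P E)"
    unfolding card_cartesian_product[symmetric] by (rule card_Un_le)
  have "d * card (row_part k P i) \<le> card (row_part k P i) * card (col_part k P i) + card (bad_edges k P E)"
    using card_mono[OF finite_UnI[OF finRC finB] s1] cu card_out_edges[OF reg Rsub] by linarith
  then show "real d * card (row_part k P i) \<le> real (card (row_part k P i)) * card (col_part k P i) + card (bad_edges k P E)"
    by (simp only: of_nat_add[symmetric] of_nat_mult[symmetric] of_nat_le_iff)
  have "d * card (col_part k P i) \<le> card (row_part k P i) * card (col_part k P i) + card (bad_edges k P E)"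
    using card_mono[OF finite_UnI[OF finRC finB] s2] cu card_in_edges[OF reg Csub] by linarith
  then show "real d * card (col_part k P i) \<le> real (card (row_part k P i)) * card (col_part k P i) + card (bad_edges k P E)"
    by (simp only: of_nat_add[symmetric] of_nat_mult[symmetric] of_nat_le_iff)
qed

lemma arith:
  fixes R C d n \<gamma> \<tau> \<epsilon> B :: real
  assumes "R \<ge> \<tau> * n" "\<tau> > 0" "n > 0" "\<epsilon> > 0" "\<gamma> \<le> \<epsilon> * \<tau> / 2" "B \<le> \<gamma> * n^2"
    "d * R \<le> R * C + B"
  shows "C \<ge> d - \<epsilon> * n / 2"
proof -
  have Rp: "R > 0" using assms(1-3) by (smt (verit) mult_pos_pos)
  have "R * (d - C) \<le> \<gamma> * n^2" using assms(6,7) by (simp add: algebra_simps)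
  also have "\<dots> \<le> (\<epsilon> * \<tau> / 2) * n^2" using assms(5) by (intro mult_right_mono) auto
  also have "\<dots> = (\<epsilon> * n / 2) * (\<tau> * n)" by (simp add: power2_eq_square algebra_simps)
  also have "\<dots> \<le> (\<epsilon> * n / 2) * R" using assms by (intro mult_left_mono) auto
  finally have "R * (d - C) \<le> R * (\<epsilon> * n / 2)" by (simp add: algebra_simps)
  then have "d - C \<le> \<epsilon> * n / 2" using Rp by simp
  then show ?thesis by simp
qed

lemma core:
  fixes \<alpha> \<epsilon> \<tau> \<gamma> :: real
  assumes e: "0 < \<epsilon>" and t: "0 < \<tau>" and g: "0 < \<gamma> \<and> \<gamma> \<le> \<epsilon> * \<tau> / 2"
  shows "\<exists>n0::nat. \<forall>(n::nat) (k::nat) (d::nat) (V::nat set) (E::(nat \<times> nat) set)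
        (P::nat \<Rightarrow> nat \<Rightarrow> nat set).
      n \<ge> n0 \<and> card V = n \<and> regular_digraph V E d \<and>
      real d \<ge> (\<alpha> + \<epsilon>) * real n \<and>
      ksq_tau_gamma_partition k \<tau> \<gamma> P V E \<longrightarrow>
        (\<forall>i\<in>{1..k}. real (card (row_part k P i)) \<ge> real d - \<epsilon> * real n / 2 \<and>
                    real (card (col_part k P i)) \<ge> real d - \<epsilon> * real n / 2) \<and>
        ksq_tau_gamma_partition k (\<alpha> + \<epsilon> / 2) \<gamma> P V E"
proof (intro exI[of _ 1] allI impI)
  fix n k d V E P
  assume H: "1 \<le> n \<and> card V = n \<and> regular_digraph V E d \<and>
    real d \<ge> (\<alpha> + \<epsilon>) * real n \<and> ksq_tau_gamma_partition k \<tau> \<gamma> P V E"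
  have part: "ksq_partition k P V" and B: "real (card (bad_edges k P E)) \<le> \<gamma> * real n ^ 2"
    and sz: "\<And>i. i \<in> {1..k} \<Longrightarrow> real (card (row_part k P i)) \<ge> \<tau> * real n \<and>
         real (card (col_part k P i)) \<ge> \<tau> * real n"
    using H unfolding ksq_tau_gamma_partition_def by auto
  have np: "real n > 0" using H by simp
  have main: "real (card (row_part k P i)) \<ge> real d - \<epsilon> * real n / 2 \<and>
            real (card (col_part k P i)) \<ge> real d - \<epsilon> * real n / 2" if i: "i \<in> {1..k}" for i
  proof
    note kb = key_bounds[OF conjunct1[OF conjunct2[OF conjunct2[OF H]]] part i]
    show "real (card (col_part k P i)) \<ge> real d - \<epsilon> * real n / 2"
      using arith[OF conjunct1[OF sz[OF i]] _ np _ _ B kb(1)] e t g by simp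
    show "real (card (row_part k P i)) \<ge> real d - \<epsilon> * real n / 2"
      using arith[OF conjunct2[OF sz[OF i]] _ np _ _ B] kb(2) e t g by (simp add: mult.commute)
  qed
  have "ksq_tau_gamma_partition k (\<alpha> + \<epsilon> / 2) \<gamma> P V E"
    unfolding ksq_tau_gamma_partition_def
  proof (intro conjI ballI)
    show "ksq_partition k P V" by (rule part)
    show "real (card (bad_edges k P E)) \<le> \<gamma> * real (card V) ^ 2" using B H by simp
    fix i assume i: "i \<in> {1..k}"
    have "(\<alpha> + \<epsilon> / 2) * real n = (\<alpha> + \<epsilon>) * real n - \<epsilon> * real n / 2" by (simp add: algebra_simps)
    also have "\<dots> \<le> real d - \<epsilon> * real n / 2" using H by simp
    finally have L: "(\<alpha> + \<epsilon> / 2) * real n \<le> real d - \<epsilon> * real n / 2" .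
    show "(\<alpha> + \<epsilon> / 2) * real (card V) \<le> real (card (row_part k P i))"
      using L main[OF i] H by simp
    show "(\<alpha> + \<epsilon> / 2) * real (card V) \<le> real (card (col_part k P i))"
      using L main[OF i] H by simp
  qed
  then show "(\<forall>i\<in>{1..k}. real (card (row_part k P i)) \<ge> real d - \<epsilon> * real n / 2 \<and>
            real (card (col_part k P i)) \<ge> real d - \<epsilon> * real n / 2) \<and>
    ksq_tau_gamma_partition k (\<alpha> + \<epsilon> / 2) \<gamma> P V E" using main by blast
qed

theorem proposition3p8:
  "\<exists>\<alpha>0>0. \<forall>\<alpha>. 0 < \<alpha> \<and> \<alpha> \<le> \<alpha>0 \<longrightarrow>
   (\<exists>\<epsilon>0>0. \<forall>\<epsilon>. 0 < \<epsilon> \<and> \<epsilon> \<le> \<epsilon>0 \<longrightarrow>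
   (\<exists>\<tau>0>0. \<forall>\<tau>. 0 < \<tau> \<and> \<tau> \<le> \<tau>0 \<longrightarrow>
   (\<exists>\<gamma>0>0. \<forall>\<gamma>. 0 < \<gamma> \<and> \<gamma> \<le> \<gamma>0 \<longrightarrow>
   (\<exists>n0::nat. \<forall>(n::nat) (k::nat) (d::nat) (V::nat set) (E::(nat \<times> nat) set)
        (P::nat \<Rightarrow> nat \<Rightarrow> nat set).
      n \<ge> n0 \<and> card V = n \<and> regular_digraph V E d \<and>
      real d \<ge> (\<alpha> + \<epsilon>) * real n \<and>
      ksq_tau_gamma_partition k \<tau> \<gamma> P V E \<longrightarrow>
        (\<forall>i\<in>{1..k}. real (card (row_part k P i)) \<ge> real d - \<epsilon> * real n / 2 \<and>
                    real (card (col_part k P i)) \<ge> real d - \<epsilon> * real n / 2) \<and>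
        ksq_tau_gamma_partition k (\<alpha> + \<epsilon> / 2) \<gamma> P V E))))"
  apply (rule exI[of _ "1::real"], rule conjI, simp, intro allI impI)
  apply (rule exI[of _ "1::real"], rule conjI, simp, intro allI impI)
  apply (rule exI[of _ "1::real"], rule conjI, simp, intro allI impI)
  subgoal premises p for \<alpha> \<epsilon> \<tau>
    apply (rule exI[of _ "\<epsilon> * \<tau> / 2"])
    using p core[of \<epsilon> \<tau> _ \<alpha>] by auto
  done

end
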